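(* There is no arithmetical structure $(r_1,\dots,r_{18})$ on $K_{18}$ with $r_1=79$.
   Context: An arithmetical structure on the complete graph $K_n$ is an $n$-tuple $(r_1,r_2,\dots,r_n)$ of positive integers with $\gcd(r_1,\dots,r_n)=1$ such that $r_j$ divides $\sum_{i=1}^n r_i$ for every $j$. The entries are always listed so that $r_1\geq r_2\geq\dots\geq r_n$; thus $r_1$ is the largest value of the structure. *)

theory Defs
  imports Main
begin

text \<open>An arithmetical structure on the complete graph K_n, given as an n-tuple
  (r 1, ..., r n) of positive integers (indices 1..n), listed in non-increasing order,
  with gcd 1 and each r j dividing the total sum.\<close>

definition arith_structure_Kn :: "nat \<Rightarrow> (nat \<Rightarrow> nat) \<Rightarrow> bool" where
  "arith_structure_Kn n r \<longleftrightarrow>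
     (\<forall>i\<in>{1..n}. 0 < r i) \<and>
     (\<forall>i j. 1 \<le> i \<longrightarrow> i \<le> j \<longrightarrow> j \<le> n \<longrightarrow> r j \<le> r i) \<and>
     Gcd (r ` {1..n}) = 1 \<and>
     (\<forall>j\<in>{1..n}. r j dvd (\<Sum>i=1..n. r i))"

end

theory Submission
  imports Defs
begin

lemma dvd79: "d dvd (79::nat) \<Longrightarrow> d = 1 \<or> d = 79"
proof -
  assume h: "d dvd (79::nat)"
  then have "d \<le> 79" by (simp add: dvd_imp_le)
  have "\<forall>d\<in>{..<80::nat}. d dvd 79 \<longrightarrow> d = 1 \<or> d = 79"
    by (simp add: lessThan_nat_numeral)
  then show ?thesis using h \<open>d \<le> 79\<close> by auto
qed

lemma count:
  fixes r :: "nat \<Rightarrow> nat"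
  assumes V: "\<forall>i\<in>{1..18::nat}. r i \<in> V" and fin: "finite V"
  shows "(\<Sum>i=1..18. r i) = (\<Sum>v\<in>V. v * card {i\<in>{1..18}. r i = v})"
    and "(\<Sum>v\<in>V. card {i\<in>{1..18::nat}. r i = v}) = 18"
proof -
  have im: "r ` {1..18} \<subseteq> V" using V by auto
  have "(\<Sum>v\<in>V. sum r {i\<in>{1..18}. r i = v}) = sum r {1..18}"
    by (rule sum.group[OF _ fin im]) simp
  moreover have "sum r {i\<in>{1..18}. r i = v} = v * card {i\<in>{1..18}. r i = v}" for v
    by auto
  ultimately show "(\<Sum>i=1..18. r i) = (\<Sum>v\<in>V. v * card {i\<in>{1..18}. r i = v})" by (simp add: mult.commute)
  have "(\<Sum>v\<in>V. sum (\<lambda>_. 1::nat) {i\<in>{1..18}. r i = v}) = sum (\<lambda>_. 1) {1..18::nat}"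
    by (rule sum.group[OF _ fin im]) simp
  then show "(\<Sum>v\<in>V. card {i\<in>{1..18::nat}. r i = v}) = 18" by simp
qed

lemma agg:
  fixes m a N T :: nat
  assumes "1 \<le> m" "m \<le> 18" "a + N = 18" "79*a + T = 79*m" "N \<le> T" "T \<le> m*N" "1 \<le> a" "a < 18"
  shows "7 \<le> m \<and> m \<le> 12 \<and> a = m - 1"
proof -
  have up: "a < m" using assms(2-5,8) by linarith
  have "\<forall>m\<in>{..<19::nat}. 1 \<le> m \<longrightarrow> m \<in> {1,2,3,4,5,6,7,8,9,10,11,12,13,14,15,16,17,18}"
    by (simp add: lessThan_nat_numeral)
  then have "m \<in> {1,2,3,4,5,6,7,8,9,10,11,12,13,14,15,16,17,18}" using assms(1,2) by auto
  then show ?thesis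
  proof (elim insertE emptyE)
    assume m: "m = 1"
    have "T \<le> 1 * N" using assms(6) m by simp
    then have False using up assms(3,4) m by linarith
    then show ?thesis ..
  next
    assume m: "m = 2"
    have "T \<le> 2 * N" using assms(6) m by simp
    then have False using up assms(3,4) m by linarith
    then show ?thesis ..
  next
    assume m: "m = 3"
    have "T \<le> 3 * N" using assms(6) m by simp
    then have False using up assms(3,4) m by linarith
    then show ?thesis ..
  next
    assume m: "m = 4"
    have "T \<le> 4 * N" using assms(6) m by simp
    then have False using up assms(3,4) m by linarith
    then show ?thesis ..
  next
    assume m: "m = 5"
    have "T \<le> 5 * N" using assms(6) m by simp
    then have False using up assms(3,4) m by linarith
    then show ?thesis ..
  next
    assume m: "m = 6"
    have "T \<le> 6 * N" using assms(6) m by simp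
    then have False using up assms(3,4) m by linarith
    then show ?thesis ..
  next
    assume m: "m = 7"
    have "T \<le> 7 * N" using assms(6) m by simp
    moreover have "\<not> a \<le> 5" using \<open>T \<le> 7 * N\<close> assms(3,4) m by linarith
    ultimately show ?thesis using up m by simp
  next
    assume m: "m = 8"
    have "T \<le> 8 * N" using assms(6) m by simp
    moreover have "\<not> a \<le> 6" using \<open>T \<le> 8 * N\<close> assms(3,4) m by linarith
    ultimately show ?thesis using up m by simp
  next
    assume m: "m = 9"
    have "T \<le> 9 * N" using assms(6) m by simp
    moreover have "\<not> a \<le> 7" using \<open>T \<le> 9 * N\<close> assms(3,4) m by linarith
    ultimately show ?thesis using up m by simp
  next
    assume m: "m = 10"
    have "T \<le> 10 * N" using assms(6) m by simp
    moreover have "\<not> a \<le> 8" using \<open>T \<le> 10 * N\<close> assms(3,4) m by linarith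
    ultimately show ?thesis using up m by simp
  next
    assume m: "m = 11"
    have "T \<le> 11 * N" using assms(6) m by simp
    moreover have "\<not> a \<le> 9" using \<open>T \<le> 11 * N\<close> assms(3,4) m by linarith
    ultimately show ?thesis using up m by simp
  next
    assume m: "m = 12"
    have "T \<le> 12 * N" using assms(6) m by simp
    moreover have "\<not> a \<le> 10" using \<open>T \<le> 12 * N\<close> assms(3,4) m by linarith
    ultimately show ?thesis using up m by simp
  next
    assume m: "m = 13"
    have "T \<le> 13 * N" using assms(6) m by simp
    then have False using up assms(3,4) m by linarith
    then show ?thesis ..
  next
    assume m: "m = 14"
    have "T \<le> 14 * N" using assms(6) m by simp
    then have False using up assms(3,4) m by linarith
    then show ?thesis ..
  next
    assume m: "m = 15"
    have "T \<le> 15 * N" using assms(6) m by simp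
    then have False using up assms(3,4) m by linarith
    then show ?thesis ..
  next
    assume m: "m = 16"
    have "T \<le> 16 * N" using assms(6) m by simp
    then have False using up assms(3,4) m by linarith
    then show ?thesis ..
  next
    assume m: "m = 17"
    have "T \<le> 17 * N" using assms(6) m by simp
    then have False using up assms(3,4) m by linarith
    then show ?thesis ..
  next
    assume m: "m = 18"
    have "T \<le> 18 * N" using assms(6) m by simp
    then have False using up assms(3,4) m by linarith
    then show ?thesis ..
  qed
qed

lemma defic:
  fixes c :: "nat \<Rightarrow> nat" and D :: "nat set"
  assumes "finite D" "\<forall>v\<in>D. v \<le> m"
  shows "(\<Sum>v\<in>D. (m - v) * c v) + (\<Sum>v\<in>D. v * c v) = m * (\<Sum>v\<in>D. c v)"
proof -
  have "(\<Sum>v\<in>D. (m - v) * c v) + (\<Sum>v\<in>D. v * c v) = (\<Sum>v\<in>D. (m - v) * c v + v * c v)"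
    by (simp add: sum.distrib)
  also have "\<dots> = (\<Sum>v\<in>D. m * c v)"
    by (rule sum.cong) (use assms(2) in \<open>auto simp: add_mult_distrib[symmetric]\<close>)
  also have "\<dots> = m * (\<Sum>v\<in>D. c v)" by (simp add: sum_distrib_left)
  finally show ?thesis .
qed

theorem mainTheorem10:
  shows "\<not> (\<exists>r :: nat \<Rightarrow> nat. arith_structure_Kn 18 r \<and> r 1 = 79)"
proof
  assume "\<exists>r :: nat \<Rightarrow> nat. arith_structure_Kn 18 r \<and> r 1 = 79"
  then obtain r :: "nat \<Rightarrow> nat" where A: "arith_structure_Kn 18 r" and r1: "r 1 = 79" by blast
  define S where "S = (\<Sum>i=1..18. r i)"
  have pos: "\<And>i. i \<in> {1..18} \<Longrightarrow> 0 < r i" using A by (simp add: arith_structure_Kn_def)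
  have le: "\<And>i. i \<in> {1..18} \<Longrightarrow> r i \<le> 79" using A r1 by (auto simp: arith_structure_Kn_def)
  have dv: "\<And>i. i \<in> {1..18} \<Longrightarrow> r i dvd S" using A by (simp add: arith_structure_Kn_def S_def)
  have G: "Gcd (r ` {1..18}) = 1" using A by (simp add: arith_structure_Kn_def)
  obtain m where hS: "S = 79 * m" using dv[of 1] r1 by auto
  have "S \<le> (\<Sum>i=(1::nat)..18. 79)" unfolding S_def by (rule sum_mono) (use le in auto)
  then have m18: "m \<le> 18" using hS by simp
  have "S \<ge> r 1" unfolding S_def by (rule member_le_sum) auto
  then have m1: "1 \<le> m" using hS r1 by simp
  have rv: "r i = 79 \<or> (r i dvd m \<and> 0 < r i)" if i: "i \<in> {1..18}" for i
  proof (cases "r i = 79")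
    case False
    with le[OF i] have lt: "r i < 79" by simp
    have "coprime (r i) 79"
    proof (rule coprimeI)
      fix d assume "d dvd r i" "d dvd (79::nat)"
      then show "is_unit d" using dvd79[of d] lt pos[OF i] dvd_imp_le[of d "r i"] by auto
    qed
    then have "r i dvd m" using dv[OF i] hS by (simp add: coprime_dvd_mult_right_iff)
    then show ?thesis using pos[OF i] by simp
  qed simp
  define c where "c v = card {i\<in>{1..18::nat}. r i = v}" for v
  have c1: "c 79 \<ge> 1"
  proof -
    have "1 \<in> {i\<in>{1..18::nat}. r i = 79}" using r1 by simp
    then have "{i\<in>{1..18::nat}. r i = 79} \<noteq> {}" by blast
    then show ?thesis unfolding c_def by (simp add: card_gt_0_iff Suc_le_eq)
  qed
  have c2: "c 79 < 18"
  proof (rule ccontr)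
    assume "\<not> c 79 < 18"
    moreover have "c 79 \<le> 18" unfolding c_def
      using card_mono[of "{1..18::nat}" "{i\<in>{1..18::nat}. r i = 79}"] by fastforce
    ultimately have "card {i\<in>{1..18::nat}. r i = 79} = card {1..18::nat}" by (simp add: c_def)
    then have "{i\<in>{1..18::nat}. r i = 79} = {1..18}"
      by (intro card_subset_eq) auto
    then have "r ` {1..18} = {79}" using r1 by force
    then show False using G by simp
  qed
  define D where "D = {d. d dvd m}"
  have finD: "finite D" unfolding D_def using m1 by (simp add: finite_divisors_nat)
  have Dle: "\<forall>v\<in>D. v \<le> m" unfolding D_def using m1 by (auto intro: dvd_imp_le)
  have Dge: "\<forall>v\<in>D. 1 \<le> v" unfolding D_def using m1 by (auto intro: Nat.gr0I)
  have n79: "79 \<notin> D" using Dle m18 by auto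
  have V: "\<forall>i\<in>{1..18::nat}. r i \<in> insert 79 D"
  proof
    fix i :: nat assume i: "i \<in> {1..18}"
    show "r i \<in> insert 79 D" using rv[OF i] unfolding D_def by auto
  qed
  define N where "N = (\<Sum>v\<in>D. c v)"
  define T where "T = (\<Sum>v\<in>D. v * c v)"
  have e1: "c 79 + N = 18" using count(2)[OF V] finD n79 by (simp add: N_def c_def)
  have e2: "79 * c 79 + T = 79 * m" using count(1)[OF V] finD n79 hS S_def by (simp add: T_def c_def)
  have "N \<le> T" unfolding N_def T_def by (rule sum_mono) (use Dge in auto)
  moreover have "T \<le> m * N" unfolding N_def T_def sum_distrib_left
    by (rule sum_mono) (use Dle in auto)
  ultimately have ag: "7 \<le> m \<and> m \<le> 12 \<and> c 79 = m - 1" using agg[OF m1 m18 e1 e2] c1 c2 by blast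
  have def: "(\<Sum>v\<in>D. (m - v) * c v) + T = m * N" using defic[OF finD Dle] by (simp add: T_def N_def)
  have "m \<in> {7,8,9,10,11,12}" using ag by auto
  then show False
  proof (elim insertE emptyE)
    assume m: "m = 7"
    have "\<forall>x\<in>{..<8::nat}. x dvd 7 \<longrightarrow> x \<in> {1,7}"
      by (simp add: lessThan_nat_numeral)
    then have hx: "(x::nat) dvd 7 \<Longrightarrow> x \<in> {1,7}" for x using dvd_imp_le[of x 7] by auto
    have Dm: "D = {1,7}" unfolding D_def m using hx by auto
    have "T = 79" "N = 12" using e1 e2 ag m by simp_all
    then have "(\<Sum>v\<in>D. (m - v) * c v) = 5" using def m by simp
    then have K: "6 * c 1 = 5" using m by (simp add: Dm)
    have b1: "c 1 \<le> 0" using K by linarith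
    have Z: "c 1 = 0" using b1 by auto
    show False using Z K by ((elim disjE)?; linarith)
  next
    assume m: "m = 8"
    have "\<forall>x\<in>{..<9::nat}. x dvd 8 \<longrightarrow> x \<in> {1,2,4,8}"
      by (simp add: lessThan_nat_numeral)
    then have hx: "(x::nat) dvd 8 \<Longrightarrow> x \<in> {1,2,4,8}" for x using dvd_imp_le[of x 8] by auto
    have Dm: "D = {1,2,4,8}" unfolding D_def m using hx by auto
    have "T = 79" "N = 11" using e1 e2 ag m by simp_all
    then have "(\<Sum>v\<in>D. (m - v) * c v) = 9" using def m by simp
    then have K: "7 * c 1 + 6 * c 2 + 4 * c 4 = 9" using m by (simp add: Dm)
    have b1: "c 1 \<le> 1" using K by linarith
    have b2: "c 2 \<le> 1" using K by linarith
    have b4: "c 4 \<le> 2" using K by linarith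
    have Z: "c 1 = 0 \<or> c 1 = 1" "c 2 = 0 \<or> c 2 = 1" "c 4 = 0 \<or> c 4 = 1 \<or> c 4 = 2" using b1 b2 b4 by auto
    show False using Z K by ((elim disjE)?; linarith)
  next
    assume m: "m = 9"
    have "\<forall>x\<in>{..<10::nat}. x dvd 9 \<longrightarrow> x \<in> {1,3,9}"
      by (simp add: lessThan_nat_numeral)
    then have hx: "(x::nat) dvd 9 \<Longrightarrow> x \<in> {1,3,9}" for x using dvd_imp_le[of x 9] by auto
    have Dm: "D = {1,3,9}" unfolding D_def m using hx by auto
    have "T = 79" "N = 10" using e1 e2 ag m by simp_all
    then have "(\<Sum>v\<in>D. (m - v) * c v) = 11" using def m by simp
    then have K: "8 * c 1 + 6 * c 3 = 11" using m by (simp add: Dm)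
    have b1: "c 1 \<le> 1" using K by linarith
    have b3: "c 3 \<le> 1" using K by linarith
    have Z: "c 1 = 0 \<or> c 1 = 1" "c 3 = 0 \<or> c 3 = 1" using b1 b3 by auto
    show False using Z K by ((elim disjE)?; linarith)
  next
    assume m: "m = 10"
    have "\<forall>x\<in>{..<11::nat}. x dvd 10 \<longrightarrow> x \<in> {1,2,5,10}"
      by (simp add: lessThan_nat_numeral)
    then have hx: "(x::nat) dvd 10 \<Longrightarrow> x \<in> {1,2,5,10}" for x using dvd_imp_le[of x 10] by auto
    have Dm: "D = {1,2,5,10}" unfolding D_def m using hx by auto
    have "T = 79" "N = 9" using e1 e2 ag m by simp_all
    then have "(\<Sum>v\<in>D. (m - v) * c v) = 11" using def m by simp
    then have K: "9 * c 1 + 8 * c 2 + 5 * c 5 = 11" using m by (simp add: Dm)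
    have b1: "c 1 \<le> 1" using K by linarith
    have b2: "c 2 \<le> 1" using K by linarith
    have b5: "c 5 \<le> 2" using K by linarith
    have Z: "c 1 = 0 \<or> c 1 = 1" "c 2 = 0 \<or> c 2 = 1" "c 5 = 0 \<or> c 5 = 1 \<or> c 5 = 2" using b1 b2 b5 by auto
    show False using Z K by ((elim disjE)?; linarith)
  next
    assume m: "m = 11"
    have "\<forall>x\<in>{..<12::nat}. x dvd 11 \<longrightarrow> x \<in> {1,11}"
      by (simp add: lessThan_nat_numeral)
    then have hx: "(x::nat) dvd 11 \<Longrightarrow> x \<in> {1,11}" for x using dvd_imp_le[of x 11] by auto
    have Dm: "D = {1,11}" unfolding D_def m using hx by auto
    have "T = 79" "N = 8" using e1 e2 ag m by simp_all
    then have "(\<Sum>v\<in>D. (m - v) * c v) = 9" using def m by simp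
    then have K: "10 * c 1 = 9" using m by (simp add: Dm)
    have b1: "c 1 \<le> 0" using K by linarith
    have Z: "c 1 = 0" using b1 by auto
    show False using Z K by ((elim disjE)?; linarith)
  next
    assume m: "m = 12"
    have "\<forall>x\<in>{..<13::nat}. x dvd 12 \<longrightarrow> x \<in> {1,2,3,4,6,12}"
      by (simp add: lessThan_nat_numeral)
    then have hx: "(x::nat) dvd 12 \<Longrightarrow> x \<in> {1,2,3,4,6,12}" for x using dvd_imp_le[of x 12] by auto
    have Dm: "D = {1,2,3,4,6,12}" unfolding D_def m using hx by auto
    have "T = 79" "N = 7" using e1 e2 ag m by simp_all
    then have "(\<Sum>v\<in>D. (m - v) * c v) = 5" using def m by simp
    then have K: "11 * c 1 + 10 * c 2 + 9 * c 3 + 8 * c 4 + 6 * c 6 = 5" using m by (simp add: Dm)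
    have b1: "c 1 \<le> 0" using K by linarith
    have b2: "c 2 \<le> 0" using K by linarith
    have b3: "c 3 \<le> 0" using K by linarith
    have b4: "c 4 \<le> 0" using K by linarith
    have b6: "c 6 \<le> 0" using K by linarith
    have Z: "c 1 = 0" "c 2 = 0" "c 3 = 0" "c 4 = 0" "c 6 = 0" using b1 b2 b3 b4 b6 by auto
    show False using Z K by ((elim disjE)?; linarith)
  qed
qed

end
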